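(* Let $1\le d<n$, let $w\le v$ (Bruhat order) in $W^{P_d}=\{u\in S_n\mid u_1<\cdots<u_d,\ u_{d+1}<\cdots<u_n\}$, and let $\lambda=\lambda_w$, $\mu=\lambda_v$. Then the map $f$ defined by $$f(T)=\{(x,x+j-i)\mid (i,j)\in D_\lambda,\ x\in T(i,j)\}$$ is a bijection from $\mathcal T_\lambda(\mu)$ to $\mathcal E_\lambda(\mu)$.
   Context: For $u\in W^{P_d}$, $\lambda_u$ is the partition $(\lambda_u)_i=u_{d+1-i}-(d+1-i)$, $i=1,\ldots,d$; since $w\le v$, $\lambda_i\le\mu_i$ for all $i$. The Young diagram $D_\lambda$ is the set of boxes $(i,j)$ with $1\le i\le d$, $1\le j\le\lambda_i$ (rows numbered top to bottom, columns left to right), so $D_\lambda\subseteq D_\mu$. Excitations: for $C\subseteq D_\mu$ and $(i,j)\in C$ with $(i+1,j),(i,j+1),(i+1,j+1)\in D_\mu\setminus C$, a type 1 excitation replaces $C$ by $C\setminus\{(i,j)\}\cup\{(i+1,j+1)\}$ and a type 2 excitation replaces $C$ by $C\cup\{(i+1,j+1)\}$; $\mathcal E_\lambda(\mu)$ is the set of subsets of $D_\mu$ obtained from $D_\lambda$ by sequences of excitations. A set-valued filling of $D_\lambda$ assigns to each box $(i,j)$ a nonempty subset $T(i,j)\subseteq\{1,\ldots,d\}$; it is semistandard (a set-valued tableau) if every entry of box $(i,j)$ is $\le$ every entry of box $(i,j+1)$ and $<$ every entry of box $(i+1,j)$ whenever these boxes exist. It is restricted by $\mu$ if $x+j-i\le\mu_x$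 for every box $(i,j)$ and every $x\in T(i,j)$. $\mathcal T_\lambda(\mu)$ is the set of set-valued tableaux of shape $\lambda$ restricted by $\mu$. *)

theory Defs
  imports Main "HOL-Combinatorics.Transposition" "HOL-Combinatorics.Permutations"
begin

(* Permutations of S_n are functions nat => nat permuting {1..n}; u i is u_i. *)

definition bruhat_step :: "nat \<Rightarrow> ((nat \<Rightarrow> nat) \<times> (nat \<Rightarrow> nat)) set" where
  "bruhat_step n = {(u, u \<circ> transpose i j) | u i j.
      u permutes {1..n} \<and> 1 \<le> i \<and> i < j \<and> j \<le> n \<and> u i < u j}"

definition bruhat_le :: "nat \<Rightarrow> (nat \<Rightarrow> nat) \<Rightarrow> (nat \<Rightarrow> nat) \<Rightarrow> bool" where
  "bruhat_le n w v \<longleftrightarrow> w permutes {1..n} \<and> (w, v) \<in> (bruhat_step n)\<^sup>*"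

definition grassmannian :: "nat \<Rightarrow> nat \<Rightarrow> (nat \<Rightarrow> nat) set" where
  "grassmannian n d = {u. u permutes {1..n} \<and>
      (\<forall>i j. 1 \<le> i \<and> i < j \<and> j \<le> d \<longrightarrow> u i < u j) \<and>
      (\<forall>i j. d + 1 \<le> i \<and> i < j \<and> j \<le> n \<longrightarrow> u i < u j)}"

definition lam :: "nat \<Rightarrow> (nat \<Rightarrow> nat) \<Rightarrow> nat \<Rightarrow> nat" where
  "lam d u i = u (d + 1 - i) - (d + 1 - i)"

definition young :: "nat \<Rightarrow> (nat \<Rightarrow> nat) \<Rightarrow> (nat \<times> nat) set" where
  "young d la = {(i, j). 1 \<le> i \<and> i \<le> d \<and> 1 \<le> j \<and> j \<le> la i}"

definition excite_step :: "nat \<Rightarrow> (nat \<Rightarrow> nat) \<Rightarrow> ((nat \<times> nat) set \<times> (nat \<times> nat) set) set" where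
  "excite_step d mu = {(C, C') | C C' i j.
      C \<subseteq> young d mu \<and> (i, j) \<in> C \<and>
      (i + 1, j) \<in> young d mu - C \<and> (i, j + 1) \<in> young d mu - C \<and>
      (i + 1, j + 1) \<in> young d mu - C \<and>
      (C' = (C - {(i, j)}) \<union> {(i + 1, j + 1)} \<or> C' = C \<union> {(i + 1, j + 1)})}"

definition excitations :: "nat \<Rightarrow> (nat \<Rightarrow> nat) \<Rightarrow> (nat \<Rightarrow> nat) \<Rightarrow> (nat \<times> nat) set set" where
  "excitations d la mu = {C. (young d la, C) \<in> (excite_step d mu)\<^sup>*}"

(* T_lambda(mu): set-valued tableaux of shape lambda restricted by mu.
   A filling is a function on boxes; it is required to be {} outside D_lambda
   so that distinct fillings are distinct functions. *)
definition sv_tableaux :: "nat \<Rightarrow> (nat \<Rightarrow> nat) \<Rightarrow> (nat \<Rightarrow> nat) \<Rightarrow> (nat \<times> nat \<Rightarrow> nat set) set" where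
  "sv_tableaux d la mu = {T.
      (\<forall>b. b \<notin> young d la \<longrightarrow> T b = {}) \<and>
      (\<forall>b \<in> young d la. T b \<noteq> {} \<and> T b \<subseteq> {1..d}) \<and>
      (\<forall>i j. (i, j) \<in> young d la \<and> (i, j + 1) \<in> young d la \<longrightarrow>
         (\<forall>a \<in> T (i, j). \<forall>b \<in> T (i, j + 1). a \<le> b)) \<and>
      (\<forall>i j. (i, j) \<in> young d la \<and> (i + 1, j) \<in> young d la \<longrightarrow>
         (\<forall>a \<in> T (i, j). \<forall>b \<in> T (i + 1, j). a < b)) \<and>
      (\<forall>i j. (i, j) \<in> young d la \<longrightarrow>
         (\<forall>x \<in> T (i, j). int x + int j - int i \<le> int (mu x)))}"

(* the map f(T) = {(x, x+j-i) | (i,j) in D_lambda, x in T(i,j)} ; for tableaux x >= i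
   so the natural-number subtraction is exact *)
definition fmap :: "nat \<Rightarrow> (nat \<Rightarrow> nat) \<Rightarrow> (nat \<times> nat \<Rightarrow> nat set) \<Rightarrow> (nat \<times> nat) set" where
  "fmap d la T = {(x, x + j - i) | x i j. (i, j) \<in> young d la \<and> x \<in> T (i, j)}"

end

theory Submission
  imports Defs
begin


lemma inc_gap:
  assumes inc: "\<And>a b. 1 \<le> a \<Longrightarrow> a < b \<Longrightarrow> b \<le> d \<Longrightarrow> w a < (w b :: nat)"
  shows "1 \<le> p \<Longrightarrow> p \<le> q \<Longrightarrow> q \<le> d \<Longrightarrow> w p + (q - p) \<le> w q"
proof (induction q)
  case 0 then show ?case by simp
next
  case (Suc q)
  show ?case
  proof (cases "p = Suc q")
    case True then show ?thesis by simp
  next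
    case False
    then have "p \<le> q" using Suc.prems by simp
    then have "w p + (q - p) \<le> w q" using Suc.IH Suc.prems by simp
    moreover have "w q < w (Suc q)" using inc[of q "Suc q"] Suc.prems \<open>p \<le> q\<close> by simp
    ultimately show ?thesis using \<open>p \<le> q\<close> by simp
  qed
qed

lemma grass_inc: "w \<in> grassmannian n d \<Longrightarrow> 1 \<le> a \<Longrightarrow> a < b \<Longrightarrow> b \<le> d \<Longrightarrow> w a < w b"
  by (simp add: grassmannian_def)

lemma lam_anti:
  assumes "w \<in> grassmannian n d" "1 \<le> i" "i \<le> i'" "i' \<le> d"
  shows "lam d w i' \<le> lam d w i"
proof -
  have "w (d+1-i') + ((d+1-i) - (d+1-i')) \<le> w (d+1-i)"
    by (rule inc_gap[OF grass_inc[OF assms(1)]]) (use assms in auto)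
  then show ?thesis unfolding lam_def using assms by simp
qed

definition cnt :: "nat \<Rightarrow> (nat \<Rightarrow> nat) \<Rightarrow> nat \<Rightarrow> nat" where
  "cnt d u t = card {k \<in> {1..d}. t \<le> u k}"

lemma cnt_step:
  assumes "(u, u') \<in> bruhat_step n"
  shows "cnt d u t \<le> cnt d u' t"
proof -
  obtain i j where u': "u' = u \<circ> transpose i j" and ij: "i < j" "u i < u j" "1 \<le> i"
    using assms unfolding bruhat_step_def by blast
  let ?A = "{k \<in> {1..d}. t \<le> u k}" and ?B = "{k \<in> {1..d}. t \<le> u' k}"
  show ?thesis unfolding cnt_def
  proof (cases "j \<le> d")
    case True
    have "?B = transpose i j ` ?A"
    proof (rule set_eqI)
      fix k
      have "k \<in> transpose i j ` ?A \<longleftrightarrow> transpose i j k \<in> ?A"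
        by (metis (no_types, lifting) image_iff transpose_involutory)
      also have "\<dots> \<longleftrightarrow> k \<in> ?B"
        using True ij u' by (auto simp: transpose_def)
      finally show "k \<in> ?B \<longleftrightarrow> k \<in> transpose i j ` ?A" by simp
    qed
    moreover have "inj_on (transpose i j) ?A" by (rule inj_on_transpose)
    ultimately show "card ?A \<le> card ?B" by (simp add: card_image)
  next
    case False
    have "?A \<subseteq> ?B"
    proof
      fix k assume k: "k \<in> ?A"
      show "k \<in> ?B"
      proof (cases "k = i")
        case True then show ?thesis using k ij u' by (auto simp: transpose_def)
      next
        case False
        then have "u' k = u k" using k \<open>\<not> j \<le> d\<close> u' by (auto simp: transpose_def)
        then show ?thesis using k by simp
      qed
    qed
    then show "card ?A \<le> card ?B" by (rule card_mono[rotated]) simp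
  qed
qed

lemma cnt_rtrancl:
  assumes "(u, u') \<in> (bruhat_step n)\<^sup>*"
  shows "cnt d u t \<le> cnt d u' t"
  using assms
proof (induction rule: rtrancl_induct)
  case base then show ?case by simp
next
  case (step y z) then show ?case using cnt_step[OF step(2), of d t] by simp
qed

lemma grass_le:
  assumes w: "w \<in> grassmannian n d" and v: "v \<in> grassmannian n d" and b: "bruhat_le n w v"
    and m: "1 \<le> m" "m \<le> d"
  shows "w m \<le> v m"
proof (rule ccontr)
  assume "\<not> w m \<le> v m"
  then have lt: "v m < w m" by simp
  have "{k \<in> {1..d}. w m \<le> w k} = {m..d}"
  proof (rule set_eqI)
    fix k show "k \<in> {k \<in> {1..d}. w m \<le> w k} \<longleftrightarrow> k \<in> {m..d}"
      using grass_inc[OF w, of k m] grass_inc[OF w, of m k] m by (cases "k < m"; cases "k = m") auto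
  qed
  then have c1: "cnt d w (w m) = d + 1 - m" by (simp add: cnt_def)
  have "{k \<in> {1..d}. w m \<le> v k} \<subseteq> {m+1..d}"
  proof
    fix k assume k: "k \<in> {k \<in> {1..d}. w m \<le> v k}"
    have "\<not> k \<le> m"
    proof
      assume "k \<le> m"
      then have "v k \<le> v m" using grass_inc[OF v, of k m] k m by (cases "k = m") auto

      then show False using k lt by simp
    qed
    then show "k \<in> {m+1..d}" using k by simp
  qed
  then have "cnt d v (w m) \<le> d - m" unfolding cnt_def using card_mono[of "{m+1..d}"] by fastforce
  moreover have "cnt d w (w m) \<le> cnt d v (w m)" using cnt_rtrancl b unfolding bruhat_le_def by blast
  ultimately show False using c1 m by simp
qed



lemma young_closed:
  assumes anti: "\<And>i i'. 1 \<le> i \<Longrightarrow> i \<le> i' \<Longrightarrow> i' \<le> d \<Longrightarrow> la i' \<le> la i"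
    and "(i',j') \<in> young d la" "1 \<le> i" "1 \<le> j" "i \<le> i'" "j \<le> j'"
  shows "(i,j) \<in> young d la"
proof -
  have "i' \<le> d" "j' \<le> la i'" using assms by (auto simp: young_def)
  then have "la i' \<le> la i" using anti[of i i'] assms by simp
  show ?thesis unfolding young_def using assms(3-6) \<open>i' \<le> d\<close> \<open>j' \<le> la i'\<close> \<open>la i' \<le> la i\<close> by auto
qed

locale exc =
  fixes d :: nat and la mu :: "nat \<Rightarrow> nat"
  assumes la_anti: "\<And>i i'. 1 \<le> i \<Longrightarrow> i \<le> i' \<Longrightarrow> i' \<le> d \<Longrightarrow> la i' \<le> la i"
    and mu_anti: "\<And>i i'. 1 \<le> i \<Longrightarrow> i \<le> i' \<Longrightarrow> i' \<le> d \<Longrightarrow> mu i' \<le> mu i"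
    and la_mu: "\<And>i. 1 \<le> i \<Longrightarrow> i \<le> d \<Longrightarrow> la i \<le> mu i"
begin

abbreviation "L \<equiv> young d la"
abbreviation "M \<equiv> young d mu"
abbreviation "tab T \<equiv> T \<in> sv_tableaux d la mu"
abbreviation "f \<equiv> fmap d la"

lemma L_closed: "(i',j') \<in> L \<Longrightarrow> 1 \<le> i \<Longrightarrow> 1 \<le> j \<Longrightarrow> i \<le> i' \<Longrightarrow> j \<le> j' \<Longrightarrow> (i,j) \<in> L"
  by (rule young_closed[OF la_anti])
lemma M_closed: "(i',j') \<in> M \<Longrightarrow> 1 \<le> i \<Longrightarrow> 1 \<le> j \<Longrightarrow> i \<le> i' \<Longrightarrow> j \<le> j' \<Longrightarrow> (i,j) \<in> M"
  by (rule young_closed[OF mu_anti])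

lemma L_M: "L \<subseteq> M" using la_mu by (fastforce simp: young_def)

lemma L_iff: "(i,j) \<in> L \<longleftrightarrow> 1 \<le> i \<and> i \<le> d \<and> 1 \<le> j \<and> j \<le> la i" by (simp add: young_def)
lemma M_iff: "(i,j) \<in> M \<longleftrightarrow> 1 \<le> i \<and> i \<le> d \<and> 1 \<le> j \<and> j \<le> mu i" by (simp add: young_def)

lemma tab_out: "tab T \<Longrightarrow> b \<notin> L \<Longrightarrow> T b = {}" by (cases b) (simp add: sv_tableaux_def)
lemma tab_ne: "tab T \<Longrightarrow> b \<in> L \<Longrightarrow> T b \<noteq> {}" by (simp add: sv_tableaux_def)
lemma tab_range: "tab T \<Longrightarrow> b \<in> L \<Longrightarrow> x \<in> T b \<Longrightarrow> 1 \<le> x \<and> x \<le> d"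
  unfolding sv_tableaux_def by (auto dest!: bspec[of _ _ b])
lemma tab_row: "tab T \<Longrightarrow> (i,j) \<in> L \<Longrightarrow> (i,j+1) \<in> L \<Longrightarrow> a \<in> T(i,j) \<Longrightarrow> b \<in> T(i,j+1) \<Longrightarrow> a \<le> b"
  by (simp add: sv_tableaux_def)
lemma tab_col: "tab T \<Longrightarrow> (i,j) \<in> L \<Longrightarrow> (i+1,j) \<in> L \<Longrightarrow> a \<in> T(i,j) \<Longrightarrow> b \<in> T(i+1,j) \<Longrightarrow> a < b"
  by (simp add: sv_tableaux_def)
lemma tab_restr: "tab T \<Longrightarrow> (i,j) \<in> L \<Longrightarrow> x \<in> T(i,j) \<Longrightarrow> int x + int j - int i \<le> int (mu x)"
  by (simp add: sv_tableaux_def)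

lemma tab_ge_row: "tab T \<Longrightarrow> (i,j) \<in> L \<Longrightarrow> x \<in> T(i,j) \<Longrightarrow> i \<le> x"
proof (induction i arbitrary: x)
  case 0 then show ?case by simp
next
  case (Suc i)
  show ?case
  proof (cases "i = 0")
    case True then show ?thesis using tab_range[OF Suc.prems] by simp
  next
    case False
    have L1: "(i,j) \<in> L" using L_closed[OF Suc.prems(2)] False Suc.prems(2) by (auto simp: L_iff)
    obtain y where y: "y \<in> T(i,j)" using tab_ne[OF Suc.prems(1) L1] by auto
    have "i \<le> y" using Suc.IH[OF Suc.prems(1) L1 y] .
    moreover have "y < x" using tab_col[OF Suc.prems(1) L1 _ y] Suc.prems by simp
    ultimately show ?thesis by simp
  qed
qed

lemma tab_mono_aux: "tab T \<Longrightarrow> (i,j) \<in> L \<Longrightarrow> (i',j') \<in> L \<Longrightarrow> i \<le> i' \<Longrightarrow> j \<le> j' \<Longrightarrow> (i,j) \<noteq> (i',j') \<Longrightarrow>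
   a \<in> T(i,j) \<Longrightarrow> b \<in> T(i',j') \<Longrightarrow> k = (i'-i)+(j'-j)
   \<Longrightarrow> a \<le> b \<and> (i < i' \<longrightarrow> a < b)"
proof (induction k arbitrary: i' j' b)
  case 0 then show ?case by simp
next
  case (Suc k)
  note tT = Suc.prems(1) and Lij = Suc.prems(2) and Lij' = Suc.prems(3) and ii = Suc.prems(4)
    and jj = Suc.prems(5) and ne = Suc.prems(6) and a = Suc.prems(7) and b = Suc.prems(8) and kk = Suc.prems(9)
  show ?case
  proof (cases "j < j'")
    case True
    have Lp: "(i', j'-1) \<in> L" by (rule L_closed[OF Lij']) (use Lij Lij' ii True in \<open>auto simp: L_iff\<close>)
    have Lp1: "(i', j'-1+1) \<in> L" using Lij' True by simp
    have b1: "b \<in> T(i', j'-1+1)" using b True by simp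
    have row: "\<And>c. c \<in> T(i',j'-1) \<Longrightarrow> c \<le> b"
      using tab_row[OF tT Lp Lp1 _ b1] by blast
    show ?thesis
    proof (cases "(i,j) = (i',j'-1)")
      case True
      then have "a \<le> b" using row a by simp
      moreover have "i = i'" using True by simp
      ultimately show ?thesis by simp
    next
      case False
      obtain c where c: "c \<in> T(i',j'-1)" using tab_ne[OF tT Lp] by auto
      have j2: "j \<le> j'-1" and k2: "k = (i'-i)+(j'-1-j)" using True kk by simp_all
      have "a \<le> c \<and> (i < i' \<longrightarrow> a < c)"
        by (rule Suc.IH[OF tT Lij Lp ii j2 False a c k2])
      then show ?thesis using row[OF c] by auto
    qed
  next
    case False
    then have jj: "j' = j" "i < i'" using jj ne ii by auto
    have Lp: "(i'-1, j') \<in> L" by (rule L_closed[OF Lij']) (use Lij Lij' jj in \<open>auto simp: L_iff\<close>)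
    have Lp1: "(i'-1+1, j') \<in> L" using Lij' jj by simp
    have b1: "b \<in> T(i'-1+1, j')" using b jj by simp
    have col: "\<And>c. c \<in> T(i'-1,j') \<Longrightarrow> c < b"
      using tab_col[OF tT Lp Lp1 _ b1] by blast
    show ?thesis
    proof (cases "(i,j) = (i'-1,j')")
      case True
      then have "a \<in> T(i'-1,j')" using a by simp
      then have "a < b" using col by blast
      then show ?thesis by simp
    next
      case False
      obtain c where c: "c \<in> T(i'-1,j')" using tab_ne[OF tT Lp] by auto
      have i2: "i \<le> i'-1" "j \<le> j'" and k2: "k = (i'-1-i)+(j'-j)" using jj kk by simp_all
      have "a \<le> c"
        using Suc.IH[OF tT Lij Lp i2 False a c k2] by simp
      then show ?thesis using col[OF c] jj by auto
    qed
  qed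
qed

lemma tab_mono: "tab T \<Longrightarrow> (i,j) \<in> L \<Longrightarrow> (i',j') \<in> L \<Longrightarrow> i \<le> i' \<Longrightarrow> j \<le> j' \<Longrightarrow> (i,j) \<noteq> (i',j') \<Longrightarrow>
   a \<in> T(i,j) \<Longrightarrow> b \<in> T(i',j') \<Longrightarrow> a \<le> b"
  using tab_mono_aux by blast
lemma tab_mono_strict: "tab T \<Longrightarrow> (i,j) \<in> L \<Longrightarrow> (i',j') \<in> L \<Longrightarrow> i < i' \<Longrightarrow> j \<le> j' \<Longrightarrow>
   a \<in> T(i,j) \<Longrightarrow> b \<in> T(i',j') \<Longrightarrow> a < b"
  using tab_mono_aux[of T i j i' j' a b] by auto

lemma tab_diag: "tab T \<Longrightarrow> (i,j) \<in> L \<Longrightarrow> (i',j') \<in> L \<Longrightarrow> a \<in> T(i,j) \<Longrightarrow> a \<in> T(i',j') \<Longrightarrow>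
   j + i' = j' + i \<Longrightarrow> i = i' \<and> j = j'"
proof -
  assume *: "tab T" "(i,j) \<in> L" "(i',j') \<in> L" "a \<in> T(i,j)" "a \<in> T(i',j')" "j + i' = j' + i"
  show ?thesis
  proof (cases i i' rule: linorder_cases)
    case less then show ?thesis using tab_mono_strict[of T i j i' j' a a] * by auto
  next
    case greater then show ?thesis using tab_mono_strict[of T i' j' i j a a] * by auto
  qed (use * in auto)
qed


lemma fmap_mem: "p \<in> f T \<longleftrightarrow> (\<exists>i j x. (i,j) \<in> L \<and> x \<in> T(i,j) \<and> p = (x, x+j-i))"
  by (auto simp: fmap_def)

lemma tab_restr_nat: "tab T \<Longrightarrow> (i,j) \<in> L \<Longrightarrow> x \<in> T(i,j) \<Longrightarrow> x + j - i \<le> mu x"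
  using tab_restr[of T i j x] tab_ge_row[of T i j x] by linarith

lemma f_sub_M: "tab T \<Longrightarrow> f T \<subseteq> M"
proof
  fix p assume t: "tab T" and "p \<in> f T"
  then obtain i j x where ij: "(i,j) \<in> L" "x \<in> T(i,j)" "p = (x, x+j-i)" by (auto simp: fmap_mem)
  have "i \<le> x" "1 \<le> x" "x \<le> d" "1 \<le> j" "x + j - i \<le> mu x"
    using tab_ge_row[OF t ij(1,2)] tab_range[OF t ij(1,2)] ij(1) tab_restr_nat[OF t ij(1,2)] by (auto simp: L_iff)
  then show "p \<in> M" using ij(3) by (auto simp: M_iff)
qed

lemma tab_upd:
  assumes t: "tab T" and ij: "(i,j) \<in> L" and S: "S \<noteq> {}" "S \<subseteq> T(i,j) \<union> {y}"
    and y: "1 \<le> y" "y \<le> d" "int y + int j - int i \<le> int (mu y)"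
    and right: "\<And>z. (i,j+1) \<in> L \<Longrightarrow> z \<in> T(i,j+1) \<Longrightarrow> y \<le> z"
    and left: "\<And>z. 2 \<le> j \<Longrightarrow> (i,j-1) \<in> L \<Longrightarrow> z \<in> T(i,j-1) \<Longrightarrow> z \<le> y"
    and below: "\<And>z. (i+1,j) \<in> L \<Longrightarrow> z \<in> T(i+1,j) \<Longrightarrow> y < z"
    and above: "\<And>z. 2 \<le> i \<Longrightarrow> (i-1,j) \<in> L \<Longrightarrow> z \<in> T(i-1,j) \<Longrightarrow> z < y"
  shows "tab (T((i,j) := S))"
proof -
  let ?T = "T((i,j) := S)"
  have mem: "\<And>c w. w \<in> ?T c \<Longrightarrow> w \<in> T c \<or> (c = (i,j) \<and> w = y)"
    using S by (auto split: if_splits)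
  have c1: "\<forall>b. b \<notin> L \<longrightarrow> ?T b = {}" using tab_out[OF t] ij by auto
  have c2: "\<forall>b \<in> L. ?T b \<noteq> {} \<and> ?T b \<subseteq> {1..d}"
  proof
    fix b assume b: "b \<in> L"
    show "?T b \<noteq> {} \<and> ?T b \<subseteq> {1..d}"
    proof
      show "?T b \<noteq> {}" using S tab_ne[OF t b] by auto
      show "?T b \<subseteq> {1..d}" using mem[of _ b] tab_range[OF t b] y by fastforce
    qed
  qed
  have c3: "\<forall>p q. (p, q) \<in> L \<and> (p, q + 1) \<in> L \<longrightarrow> (\<forall>a \<in> ?T (p, q). \<forall>b \<in> ?T (p, q + 1). a \<le> b)"
  proof (intro allI impI ballI)
    fix p q a b assume pq: "(p, q) \<in> L \<and> (p, q + 1) \<in> L" and a: "a \<in> ?T (p, q)" and b: "b \<in> ?T (p, q + 1)"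
    from mem[OF a] mem[OF b] pq show "a \<le> b"
    proof (elim disjE conjE)
      assume "a \<in> T(p,q)" "b \<in> T(p,q+1)" then show ?thesis using tab_row[OF t] pq by blast
    next
      assume "a \<in> T(p,q)" "(p,q+1) = (i,j)" "b = y"
      moreover then have "2 \<le> j" using pq by (auto simp: L_iff)
      ultimately show ?thesis using left pq by auto
    next
      assume "(p,q) = (i,j)" "a = y" "b \<in> T(p,q+1)" then show ?thesis using right pq by auto
    qed auto
  qed
  have c4: "\<forall>p q. (p, q) \<in> L \<and> (p + 1, q) \<in> L \<longrightarrow> (\<forall>a \<in> ?T (p, q). \<forall>b \<in> ?T (p + 1, q). a < b)"
  proof (intro allI impI ballI)
    fix p q a b assume pq: "(p, q) \<in> L \<and> (p + 1, q) \<in> L" and a: "a \<in> ?T (p, q)" and b: "b \<in> ?T (p + 1, q)"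
    from mem[OF a] mem[OF b] pq show "a < b"
    proof (elim disjE conjE)
      assume "a \<in> T(p,q)" "b \<in> T(p+1,q)" then show ?thesis using tab_col[OF t] pq by blast
    next
      assume "a \<in> T(p,q)" "(p+1,q) = (i,j)" "b = y"
      moreover then have "2 \<le> i" using pq by (auto simp: L_iff)
      ultimately show ?thesis using above pq by auto
    next
      assume "(p,q) = (i,j)" "a = y" "b \<in> T(p+1,q)" then show ?thesis using below pq by auto
    qed auto
  qed
  have c5: "\<forall>p q. (p, q) \<in> L \<longrightarrow> (\<forall>x \<in> ?T (p, q). int x + int q - int p \<le> int (mu x))"
  proof (intro allI impI ballI)
    fix p q x assume pq: "(p,q) \<in> L" and x: "x \<in> ?T (p,q)"
    from mem[OF x] show "int x + int q - int p \<le> int (mu x)"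
      using tab_restr[OF t pq] y(3) by auto
  qed
  show ?thesis unfolding sv_tableaux_def using c1 c2 c3 c4 c5 by blast
qed


lemma f_pos: "tab T \<Longrightarrow> (i,j) \<in> L \<Longrightarrow> x \<in> T(i,j) \<Longrightarrow> (x, x+j-i) \<in> f T"
  by (auto simp: fmap_mem)

lemma step_tab:
  assumes t: "tab T" and st: "(f T, C') \<in> excite_step d mu"
  shows "\<exists>T'. tab T' \<and> C' = f T'"
proof -
  obtain a b where ab: "(a,b) \<in> f T" and n1: "(a+1,b) \<in> M - f T" and n2: "(a,b+1) \<in> M - f T"
    and n3: "(a+1,b+1) \<in> M - f T"
    and C': "C' = (f T - {(a,b)}) \<union> {(a+1,b+1)} \<or> C' = f T \<union> {(a+1,b+1)}"
  proof -
    have "\<exists>a b. (a,b) \<in> f T \<and> (a+1,b) \<in> M - f T \<and> (a,b+1) \<in> M - f T \<and> (a+1,b+1) \<in> M - f T \<and>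
      (C' = (f T - {(a,b)}) \<union> {(a+1,b+1)} \<or> C' = f T \<union> {(a+1,b+1)})"
      using st unfolding excite_step_def by (simp only: mem_Collect_eq prod.inject) metis
    then show ?thesis using that by blast
  qed
  obtain i j x where ij0: "(i,j) \<in> L" "x \<in> T(i,j)" "(a,b) = (x, x+j-i)"
  proof -
    from ab have "\<exists>i j x. (i,j) \<in> L \<and> x \<in> T(i,j) \<and> (a,b) = (x, x+j-i)" by (simp only: fmap_mem)
    then show ?thesis using that by blast
  qed
  have ij: "(i,j) \<in> L" "a \<in> T(i,j)" and b: "b = a + j - i" using ij0 by auto
  have ia: "i \<le> a" using tab_ge_row[OF t ij] .
  have e1: "a + 1 + j - i = b + 1" using b ia by simp

  have n1': "(a+1,b) \<in> M" and n3': "(a+1,b+1) \<in> M" using n1 n3 by simp_all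
  have F1: "1 \<le> a+1" "a+1 \<le> d" using n1' unfolding M_iff by simp_all
  have "b+1 \<le> mu (a+1)" using n3' unfolding M_iff by simp
  then have F4: "int (a+1) + int j - int i \<le> int (mu (a+1))" using b ia by linarith
  have right: "\<And>z. (i,j+1) \<in> L \<Longrightarrow> z \<in> T(i,j+1) \<Longrightarrow> a+1 \<le> z"
  proof -
    fix z assume L1: "(i,j+1) \<in> L" and z: "z \<in> T(i,j+1)"
    have "a \<le> z" using tab_row[OF t ij(1) L1 ij(2) z] .
    moreover have "a + (j+1) - i = b + 1" using b ia by simp
    then have "z \<noteq> a" using f_pos[OF t L1, of a] n2 z by auto
    ultimately show "a+1 \<le> z" by simp
  qed
  have left: "\<And>z. 2 \<le> j \<Longrightarrow> (i,j-1) \<in> L \<Longrightarrow> z \<in> T(i,j-1) \<Longrightarrow> z \<le> a+1"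
  proof -
    fix z assume j2: "2 \<le> j" and L1: "(i,j-1) \<in> L" and z: "z \<in> T(i,j-1)"
    have "(i, j-1+1) \<in> L" "a \<in> T(i,j-1+1)" using ij j2 by simp_all
    then have "z \<le> a" using tab_row[OF t L1 _ z] by blast
    then show "z \<le> a+1" by simp
  qed
  have below: "\<And>z. (i+1,j) \<in> L \<Longrightarrow> z \<in> T(i+1,j) \<Longrightarrow> a+1 < z"
  proof -
    fix z assume L1: "(i+1,j) \<in> L" and z: "z \<in> T(i+1,j)"
    have "a < z" using tab_col[OF t ij(1) L1 ij(2) z] .
    moreover have "(a+1) + j - (i+1) = b" using b ia by simp
    then have "z \<noteq> a+1" using f_pos[OF t L1, of "a+1"] n1 z by auto
    ultimately show "a+1 < z" by simp
  qed
  have above: "\<And>z. 2 \<le> i \<Longrightarrow> (i-1,j) \<in> L \<Longrightarrow> z \<in> T(i-1,j) \<Longrightarrow> z < a+1"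
  proof -
    fix z assume i2: "2 \<le> i" and L1: "(i-1,j) \<in> L" and z: "z \<in> T(i-1,j)"
    have "(i-1+1, j) \<in> L" "a \<in> T(i-1+1,j)" using ij i2 by simp_all
    then have "z < a" using tab_col[OF t L1 _ z] by blast
    then show "z < a+1" by simp
  qed
  from C' show ?thesis
  proof
    assume C'1: "C' = (f T - {(a,b)}) \<union> {(a+1,b+1)}"
    let ?T = "T((i,j) := (T(i,j) - {a}) \<union> {a+1})"
    have tt: "tab ?T" by (rule tab_upd[OF t ij(1) _ _ F1 F4 right left below above]) auto
    have "f ?T = C'"
    proof (rule set_eqI)
      fix p
      show "p \<in> f ?T \<longleftrightarrow> p \<in> C'"
      proof
        assume "p \<in> f ?T"
        then obtain i' j' x where p: "(i',j') \<in> L" "x \<in> ?T(i',j')" "p = (x, x+j'-i')" by (auto simp: fmap_mem)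
        show "p \<in> C'"
        proof (cases "(i',j') = (i,j)")
          case True
          then show ?thesis using p C'1 f_pos[OF t ij(1)] b ia by auto
        next
          case False
          then have x: "x \<in> T(i',j')" using p by auto
          have "p \<noteq> (a,b)"
          proof
            assume "p = (a,b)"
            then have "x = a" "a + j' - i' = a + j - i" using p b by auto
            moreover have "i' \<le> a" using tab_ge_row[OF t p(1) x] \<open>x = a\<close> by simp
            ultimately have "j + i' = j' + i" using ia by linarith
            then show False using tab_diag[OF t ij(1) p(1) ij(2)] x \<open>x = a\<close> False by auto
          qed
          then show ?thesis using C'1 f_pos[OF t p(1) x] p by auto
        qed
      next
        assume "p \<in> C'"
        then have "p = (a+1,b+1) \<or> (p \<in> f T \<and> p \<noteq> (a,b))" using C'1 by auto
        then show "p \<in> f ?T"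
        proof
          assume "p = (a+1,b+1)"
          then show ?thesis using f_pos[OF tt ij(1), of "a+1"] e1 by auto
        next
          assume pp: "p \<in> f T \<and> p \<noteq> (a,b)"
          then obtain i' j' x where p: "(i',j') \<in> L" "x \<in> T(i',j')" "p = (x, x+j'-i')" by (auto simp: fmap_mem)
          have "x \<in> ?T(i',j')"
          proof (cases "(i',j') = (i,j)")
            case True
            then show ?thesis using p pp b by auto
          qed (use p in auto)
          then show ?thesis using f_pos[OF tt p(1)] p by auto
        qed
      qed
    qed
    then show ?thesis using tt by blast
  next
    assume C'2: "C' = f T \<union> {(a+1,b+1)}"
    let ?T = "T((i,j) := T(i,j) \<union> {a+1})"
    have tt: "tab ?T" by (rule tab_upd[OF t ij(1) _ _ F1 F4 right left below above]) auto
    have "f ?T = C'"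
    proof (rule set_eqI)
      fix p
      show "p \<in> f ?T \<longleftrightarrow> p \<in> C'"
      proof
        assume "p \<in> f ?T"
        then obtain i' j' x where p: "(i',j') \<in> L" "x \<in> ?T(i',j')" "p = (x, x+j'-i')" by (auto simp: fmap_mem)
        show "p \<in> C'"
        proof (cases "(i',j') = (i,j)")
          case True
          then show ?thesis using p C'2 f_pos[OF t ij(1)] b ia by auto
        next
          case False
          then show ?thesis using p C'2 f_pos[OF t p(1)] by auto
        qed
      next
        assume "p \<in> C'"
        then have "p = (a+1,b+1) \<or> p \<in> f T" using C'2 by auto
        then show "p \<in> f ?T"
        proof
          assume "p = (a+1,b+1)"
          then show ?thesis using f_pos[OF tt ij(1), of "a+1"] e1 by auto
        next
          assume pp: "p \<in> f T"
          then obtain i' j' x where p: "(i',j') \<in> L" "x \<in> T(i',j')" "p = (x, x+j'-i')" by (auto simp: fmap_mem)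
          have "x \<in> ?T(i',j')" using p by auto
          then show ?thesis using f_pos[OF tt p(1)] p by auto
        qed
      qed
    qed
    then show ?thesis using tt by blast
  qed
qed


lemma f_pos_ex: "(r,c) \<in> f T \<Longrightarrow> tab T \<Longrightarrow> (\<exists>i j. (i,j) \<in> L \<and> r \<in> T(i,j) \<and> i \<le> r \<and> r + j = c + i)"
proof -
  assume rc: "(r,c) \<in> f T" and t: "tab T"
  from rc have "\<exists>i j x. (i,j) \<in> L \<and> x \<in> T(i,j) \<and> (r,c) = (x, x+j-i)" by (simp only: fmap_mem)
  then obtain i j x where "(i,j) \<in> L" "x \<in> T(i,j)" "(r,c) = (x, x+j-i)" by blast
  moreover have "i \<le> x" using tab_ge_row[OF t calculation(1,2)] .
  ultimately show ?thesis by (intro exI[of _ i] exI[of _ j]) auto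
qed

lemma inj_aux:

  assumes t: "tab T" and t': "tab T'" and eq: "f T = f T'"
    and prev: "\<And>p q. (p,q) \<in> L \<Longrightarrow> p+q < i+j \<Longrightarrow> T(p,q) = T'(p,q)"
    and ij: "(i,j) \<in> L"
  shows "T(i,j) \<subseteq> T'(i,j)"
proof
  fix x assume x: "x \<in> T(i,j)"
  have ix: "i \<le> x" using tab_ge_row[OF t ij x] .
  have "(x, x+j-i) \<in> f T'" using f_pos[OF t ij x] eq by simp
  then obtain i' j' where ij': "(i',j') \<in> L" "x \<in> T'(i',j')" "i' \<le> x" "x + j' = x + j - i + i'"
    using f_pos_ex[OF _ t'] by blast
  have d1: "j + i' = j' + i" using ij'(4) ix by linarith
  show "x \<in> T'(i,j)"
  proof (cases i' i rule: linorder_cases)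
    case equal then show ?thesis using d1 ij' by simp
  next
    case less
    then have "i'+j' < i+j" using d1 by linarith
    then have "x \<in> T(i',j')" using prev[OF ij'(1)] ij'(2) by simp
    then have "i = i'" using tab_diag[OF t ij ij'(1) x] d1 by simp
    then show ?thesis using less by simp
  next
    case greater
    have jj: "j < j'" using d1 greater by linarith
    have L1: "(i+1,j) \<in> L" by (rule L_closed[OF ij'(1)]) (use ij greater jj in \<open>auto simp: L_iff\<close>)
    obtain z where z: "z \<in> T'(i+1,j)" using tab_ne[OF t' L1] by auto
    have zx: "z \<le> x" by (rule tab_mono[OF t' L1 ij'(1) _ _ _ z ij'(2)]) (use greater jj in auto)
    have iz: "i+1 \<le> z" using tab_ge_row[OF t' L1 z] .
    have "(z, z+j-(i+1)) \<in> f T" using f_pos[OF t' L1 z] eq by simp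
    then obtain i'' j'' where ij'': "(i'',j'') \<in> L" "z \<in> T(i'',j'')" "i'' \<le> z" "z + j'' = z + j - (i+1) + i''"
      using f_pos_ex[OF _ t] by blast
    have d2: "j + i'' = j'' + i + 1" using ij''(4) iz by linarith
    show ?thesis
    proof (cases "i'' \<le> i")
      case True
      then have "i''+j'' < i+j" using d2 by linarith
      then have "z \<in> T'(i'',j'')" using prev[OF ij''(1)] ij''(2) by simp
      then have "i'' = i+1" using tab_diag[OF t' ij''(1) L1 _ z] d2 by simp
      then show ?thesis using True by simp
    next
      case False
      then have "x < z" using tab_mono_strict[OF t ij ij''(1) _ _ x ij''(2)] d2 by simp
      then show ?thesis using zx by simp
    qed
  qed
qed

lemma f_inj:
  assumes t: "tab T" and t': "tab T'" and eq: "f T = f T'"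
  shows "T = T'"
proof -
  have main: "\<forall>i j. (i,j) \<in> L \<longrightarrow> i + j = s \<longrightarrow> T(i,j) = T'(i,j)" for s
  proof (induction s rule: less_induct)
    case (less s)
    have prev: "\<And>p q. (p,q) \<in> L \<Longrightarrow> p+q < s \<Longrightarrow> T(p,q) = T'(p,q)" using less by blast
    show ?case
    proof (intro allI impI)
      fix i j assume ij: "(i,j) \<in> L" and s: "i + j = s"
      have "T(i,j) \<subseteq> T'(i,j)" by (rule inj_aux[OF t t' eq _ ij]) (use prev s in auto)
      moreover have "T'(i,j) \<subseteq> T(i,j)" by (rule inj_aux[OF t' t eq[symmetric] _ ij]) (use prev s in auto)
      ultimately show "T(i,j) = T'(i,j)" by blast
    qed
  qed
  show ?thesis
  proof
    fix b show "T b = T' b"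
    proof (cases "b \<in> L")
      case True then show ?thesis using main by (cases b) blast
    next
      case False then show ?thesis using tab_out[OF t] tab_out[OF t'] by simp
    qed
  qed
qed


lemma excite_intro:
  assumes "C \<subseteq> M" "(a,c) \<in> C" "(a+1,c) \<in> M - C" "(a,c+1) \<in> M - C" "(a+1,c+1) \<in> M - C"
    "C' = (C - {(a,c)}) \<union> {(a+1,c+1)} \<or> C' = C \<union> {(a+1,c+1)}"
  shows "(C, C') \<in> excite_step d mu"
  unfolding excite_step_def using assms by blast

lemma finite_L: "finite L"
proof -
  have "L \<subseteq> {0..d} \<times> {0..la 1}"
  proof
    fix p assume "p \<in> L"
    then obtain i j where "p = (i,j)" "1 \<le> i" "i \<le> d" "1 \<le> j" "j \<le> la i" by (cases p) (auto simp: L_iff)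
    moreover have "la i \<le> la 1" using la_anti[of 1 i] calculation by simp
    ultimately show "p \<in> {0..d} \<times> {0..la 1}" by auto
  qed
  then show ?thesis by (rule finite_subset) simp
qed

definition wt :: "(nat \<times> nat \<Rightarrow> nat set) \<Rightarrow> nat" where
  "wt T = (\<Sum>b\<in>L. \<Sum>x\<in>T b. x)"

lemma tab_finite: "tab T \<Longrightarrow> finite (T b)"
  using tab_out[of T b] tab_range[of T b] by (cases "b \<in> L") (auto intro: finite_subset[of _ "{1..d}"])

lemma base_case:
  assumes t: "tab T" and no: "\<forall>i j x. (i,j) \<in> L \<longrightarrow> x \<in> T(i,j) \<longrightarrow> x \<le> i"
  shows "f T = L"
proof (rule set_eqI)
  fix p show "p \<in> f T \<longleftrightarrow> p \<in> L"
  proof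
    assume "p \<in> f T"
    then obtain i j where "(i,j) \<in> L" "fst p \<in> T(i,j)" "i \<le> fst p" "fst p + j = snd p + i"
      using f_pos_ex[OF _ t, of "fst p" "snd p"] by auto
    moreover then have "fst p = i" using no by force
    ultimately show "p \<in> L" by (cases p) auto
  next
    assume pL: "p \<in> L"
    obtain i j where p: "p = (i,j)" by (cases p)
    obtain x where x: "x \<in> T(i,j)" using tab_ne[OF t] pL p by blast
    have "x = i" using no x pL p tab_ge_row[OF t _ x] by force
    then show "p \<in> f T" using f_pos[OF t _ x] pL p by simp
  qed
qed


lemma destep:
  assumes t: "tab T" and ij: "(i,j) \<in> L" and x: "x \<in> T(i,j)" and ix: "i < x"
    and M1: "\<And>i' j' y. (i',j') \<in> L \<Longrightarrow> y \<in> T(i',j') \<Longrightarrow> i' < y \<Longrightarrow> x \<le> y"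
    and M2: "\<And>i' j'. (i',j') \<in> L \<Longrightarrow> x \<in> T(i',j') \<Longrightarrow> i' < x \<Longrightarrow> j \<le> j'"
  shows "\<exists>T'. tab T' \<and> wt T' < wt T \<and> (f T', f T) \<in> excite_step d mu"
proof -
  define S where "S = (if x-1 \<in> T(i,j) then T(i,j) - {x} else (T(i,j) - {x}) \<union> {x-1})"
  define T' where "T' = T((i,j) := S)"
  have i1: "1 \<le> i" using ij by (simp add: L_iff)
  have xd: "x \<le> d" using tab_range[OF t ij x] by simp
  have rx: "x + j - i \<le> mu x" using tab_restr_nat[OF t ij x] .
  have mux: "mu x \<le> mu (x-1)" using mu_anti[of "x-1" x] ix i1 xd by simp
  have Sne: "S \<noteq> {}" "x - 1 \<in> S" "x \<notin> S" using ix by (auto simp: S_def)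
  have Ssub: "S \<subseteq> T(i,j) \<union> {x-1}" by (auto simp: S_def)
  have right: "\<And>z. (i,j+1) \<in> L \<Longrightarrow> z \<in> T(i,j+1) \<Longrightarrow> x-1 \<le> z"
    using tab_row[OF t ij _ x] by fastforce
  have left: "\<And>z. 2 \<le> j \<Longrightarrow> (i,j-1) \<in> L \<Longrightarrow> z \<in> T(i,j-1) \<Longrightarrow> z \<le> x-1"
  proof -
    fix z assume j2: "2 \<le> j" and L1: "(i,j-1) \<in> L" and z: "z \<in> T(i,j-1)"
    have "(i, j-1+1) \<in> L" "x \<in> T(i,j-1+1)" using ij x j2 by simp_all
    then have "z \<le> x" using tab_row[OF t L1 _ z] by blast
    moreover have "z \<noteq> x" using M2[OF L1] z ix j2 by force
    ultimately show "z \<le> x-1" by simp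
  qed
  have below: "\<And>z. (i+1,j) \<in> L \<Longrightarrow> z \<in> T(i+1,j) \<Longrightarrow> x-1 < z"
    using tab_col[OF t ij _ x] by fastforce
  have above: "\<And>z. 2 \<le> i \<Longrightarrow> (i-1,j) \<in> L \<Longrightarrow> z \<in> T(i-1,j) \<Longrightarrow> z < x-1"
  proof -
    fix z assume i2: "2 \<le> i" and L1: "(i-1,j) \<in> L" and z: "z \<in> T(i-1,j)"
    have "(i-1+1, j) \<in> L" "x \<in> T(i-1+1,j)" using ij x i2 by simp_all
    then have "z < x" using tab_col[OF t L1 _ z] by blast
    moreover have "z \<noteq> x-1" using M1[OF L1 z] ix i2 by force
    ultimately show "z < x-1" by simp
  qed
  have y3: "int (x-1) + int j - int i \<le> int (mu (x-1))" using rx mux ix by linarith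
  have tt: "tab T'" unfolding T'_def
    by (rule tab_upd[OF t ij Sne(1) Ssub _ _ y3 right left below above]) (use ix xd i1 in auto)
  have T'mem: "\<And>c w. w \<in> T' c \<Longrightarrow> w \<in> T c \<or> (c = (i,j) \<and> w = x-1)"
    using Ssub by (auto simp: T'_def split: if_splits)
  have T'mem2: "\<And>c w. w \<in> T c \<Longrightarrow> w \<in> T' c \<or> (c = (i,j) \<and> w = x)"
    by (auto simp: T'_def S_def)
  have fin: "finite (T(i,j))" using tab_finite[OF t] .
  have sumS: "(\<Sum>y\<in>S. y) < (\<Sum>y\<in>T(i,j). y)"
  proof -
    have eq1: "(\<Sum>y\<in>T(i,j). y) = x + (\<Sum>y\<in>T(i,j) - {x}. y)" using sum.remove[OF fin x] by simp
    show ?thesis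
    proof (cases "x-1 \<in> T(i,j)")
      case True
      then show ?thesis using eq1 ix by (simp add: S_def)
    next
      case False
      then have "(\<Sum>y\<in>S. y) = (x-1) + (\<Sum>y\<in>T(i,j) - {x}. y)"
        using fin by (simp add: S_def)
      then show ?thesis using eq1 ix by simp
    qed
  qed
  have wlt: "wt T' < wt T" unfolding wt_def
  proof (rule sum_strict_mono_ex1[OF finite_L])
    show "\<forall>b\<in>L. (\<Sum>y\<in>T' b. y) \<le> (\<Sum>y\<in>T b. y)" using sumS by (auto simp: T'_def)
    show "\<exists>b\<in>L. (\<Sum>y\<in>T' b. y) < (\<Sum>y\<in>T b. y)" using sumS ij by (auto simp: T'_def)
  qed
  define a where "a = x - 1"
  define c where "c = a + j - i"
  have xa: "x = a + 1" "i \<le> a" using ix by (auto simp: a_def)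
  have c1: "c + 1 = x + j - i" using xa by (simp add: c_def)
  have cge: "1 \<le> c" using ij xa by (auto simp: c_def L_iff)
  have inC: "(a,c) \<in> f T'" using f_pos[OF tt ij, of a] Sne(2) by (simp add: T'_def a_def c_def)
  have pMx: "(x, c+1) \<in> M" using f_sub_M[OF t] f_pos[OF t ij x] c1 by auto
  have pM1: "(a+1, c) \<in> M" using M_closed[OF pMx] xa cge by (simp add: M_iff)
  have pM2: "(a, c+1) \<in> M" using pMx mux xa xd i1 ix unfolding M_iff by simp
  have n1: "(a+1, c) \<notin> f T'"
  proof
    assume "(a+1, c) \<in> f T'"
    then obtain i' j' where ij': "(i',j') \<in> L" "x \<in> T'(i',j')" "i' \<le> x" "x + j' = c + i'"
      using f_pos_ex[OF _ tt] xa by blast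
    have ne: "(i',j') \<noteq> (i,j)" and xT: "x \<in> T(i',j')" using ij'(2) T'mem[OF ij'(2)] Sne(3) xa
      by (auto simp: T'_def)
    have d: "j + i' = j' + i + 1" using ij'(4) xa c_def by linarith
    show False
    proof (cases "i + 1 \<le> i'")
      case True
      have "i < i'" "j \<le> j'" using True d by linarith+
      then show False using tab_mono_strict[OF t ij ij'(1) _ _ x xT] by simp
    next
      case False
      then have "i' < x" using ix by simp
      then have "j \<le> j'" using M2[OF ij'(1) xT] by simp
      then show False using d False by linarith

    qed
  qed
  have n2: "(a, c+1) \<notin> f T'"
  proof
    assume "(a, c+1) \<in> f T'"
    then obtain i' j' where ij': "(i',j') \<in> L" "a \<in> T'(i',j')" "i' \<le> a" "a + j' = c + 1 + i'"
      using f_pos_ex[OF _ tt] by blast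
    have d: "j' + i = j + 1 + i'" using ij'(4) xa c_def by linarith
    then have ne: "(i',j') \<noteq> (i,j)" by auto
    then have aT: "a \<in> T(i',j')" using T'mem[OF ij'(2)] by auto
    show False
    proof (cases "i \<le> i'")
      case True
      have "j \<le> j'" using d True by linarith
      then have "x \<le> a" using tab_mono[OF t ij ij'(1) True _ not_sym[OF ne] x aT] by simp
      then show False using xa by simp
    next
      case False
      then have "i' < a" using xa by simp
      then show False using M1[OF ij'(1) aT] xa by simp
    qed
  qed
  have n3: "(a+1, c+1) \<notin> f T'"
  proof
    assume "(a+1, c+1) \<in> f T'"
    then obtain i' j' where ij': "(i',j') \<in> L" "x \<in> T'(i',j')" "i' \<le> x" "x + j' = c + 1 + i'"
      using f_pos_ex[OF _ tt] xa by blast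
    have xT: "x \<in> T(i',j')" using T'mem[OF ij'(2)] ix by auto

    have d: "j + i' = j' + i" using ij'(4) xa c_def by linarith
    then have "(i',j') = (i,j)" using tab_diag[OF t ij ij'(1) x xT] by simp
    then show False using ij'(2) Sne(3) by (simp add: T'_def)
  qed
  have seq: "f T = (f T' - {(a,c)}) \<union> {(a+1,c+1)} \<or> f T = f T' \<union> {(a+1,c+1)}"
  proof (cases "x-1 \<in> T(i,j)")
    case True
    have "f T = f T' \<union> {(a+1,c+1)}"
    proof (rule set_eqI)
      fix p show "p \<in> f T \<longleftrightarrow> p \<in> f T' \<union> {(a+1,c+1)}"
      proof
        assume "p \<in> f T"
        then obtain i' j' y where p: "(i',j') \<in> L" "y \<in> T(i',j')" "p = (y, y+j'-i')" by (auto simp: fmap_mem)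
        from T'mem2[OF p(2)] show "p \<in> f T' \<union> {(a+1,c+1)}"
        proof
          assume "y \<in> T'(i',j')" then show ?thesis using f_pos[OF tt p(1)] p(3) by auto
        next
          assume "(i',j') = (i,j) \<and> y = x" then show ?thesis using p(3) c1 xa by auto
        qed
      next
        assume "p \<in> f T' \<union> {(a+1,c+1)}"
        then show "p \<in> f T"
        proof
          assume "p \<in> f T'"
          then obtain i' j' y where p: "(i',j') \<in> L" "y \<in> T'(i',j')" "p = (y, y+j'-i')" by (auto simp: fmap_mem)
          have "y \<in> T(i',j')" using p(2) True by (auto simp: T'_def S_def split: if_splits)
          then show ?thesis using f_pos[OF t p(1)] p(3) by auto
        next
          assume "p \<in> {(a+1,c+1)}" then show ?thesis using f_pos[OF t ij x] c1 xa by auto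
        qed
      qed
    qed
    then show ?thesis by blast
  next
    case False
    have "f T = (f T' - {(a,c)}) \<union> {(a+1,c+1)}"
    proof (rule set_eqI)
      fix p show "p \<in> f T \<longleftrightarrow> p \<in> (f T' - {(a,c)}) \<union> {(a+1,c+1)}"
      proof
        assume "p \<in> f T"
        then obtain i' j' y where p: "(i',j') \<in> L" "y \<in> T(i',j')" "p = (y, y+j'-i')" by (auto simp: fmap_mem)
        from T'mem2[OF p(2)] show "p \<in> (f T' - {(a,c)}) \<union> {(a+1,c+1)}"
        proof
          assume yT': "y \<in> T'(i',j')"
          have "p \<noteq> (a,c)"
          proof
            assume pa: "p = (a,c)"
            then have ya: "y = a" using p(3) by simp
            have "i' \<le> y" using tab_ge_row[OF t p(1,2)] .
            then have d: "j' + i = j + i'" using pa p(3) ya xa by (simp add: c_def)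
            have aT': "a \<in> T'(i,j)" using Sne(2) by (simp add: T'_def a_def)
            have "(i',j') = (i,j)" using tab_diag[OF tt ij p(1) aT'] yT' ya d by simp
            then show False using p(2) ya False by (simp add: a_def)
          qed
          then show ?thesis using f_pos[OF tt p(1) yT'] p(3) by auto
        next
          assume "(i',j') = (i,j) \<and> y = x" then show ?thesis using p(3) c1 xa by auto
        qed
      next
        assume "p \<in> (f T' - {(a,c)}) \<union> {(a+1,c+1)}"
        then show "p \<in> f T"
        proof
          assume pp: "p \<in> f T' - {(a,c)}"
          then obtain i' j' y where p: "(i',j') \<in> L" "y \<in> T'(i',j')" "p = (y, y+j'-i')" by (auto simp: fmap_mem)
          from T'mem[OF p(2)] have "y \<in> T(i',j')"
          proof
            assume "(i',j') = (i,j) \<and> y = x-1"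
            then have "p = (a,c)" using p(3) by (simp add: a_def c_def)
            then show ?thesis using pp by simp
          qed
          then show ?thesis using f_pos[OF t p(1)] p(3) by auto
        next
          assume "p \<in> {(a+1,c+1)}" then show ?thesis using f_pos[OF t ij x] c1 xa by auto
        qed
      qed
    qed
    then show ?thesis by blast
  qed
  have "(f T', f T) \<in> excite_step d mu"
    by (rule excite_intro[OF f_sub_M[OF tt] inC _ _ _ seq]) (use pM1 pM2 pMx xa n1 n2 n3 in auto)
  then show ?thesis using tt wlt by blast
qed


lemma f_exc_aux: "\<forall>T. wt T = n \<longrightarrow> tab T \<longrightarrow> (L, f T) \<in> (excite_step d mu)\<^sup>*"
proof (induction n rule: less_induct)
  case (less n)
  show ?case
  proof (intro allI impI)
    fix T assume wn: "wt T = n" and t: "tab T"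
    show "(L, f T) \<in> (excite_step d mu)\<^sup>*"
    proof (cases "\<forall>i j x. (i,j) \<in> L \<longrightarrow> x \<in> T(i,j) \<longrightarrow> x \<le> i")
      case True
      then show ?thesis using base_case[OF t] by simp
    next
      case False
      define P where "P x \<longleftrightarrow> (\<exists>i j. (i,j) \<in> L \<and> x \<in> T(i,j) \<and> i < x)" for x
      have "\<exists>x. P x" using False unfolding P_def by (auto simp: not_le)
      then obtain x0 where "P x0" by blast
      define x where "x = (LEAST x. P x)"
      have Px: "P x" unfolding x_def by (rule LeastI[of P x0]) fact
      have M1: "\<And>i' j' y. (i',j') \<in> L \<Longrightarrow> y \<in> T(i',j') \<Longrightarrow> i' < y \<Longrightarrow> x \<le> y"
      proof -
        fix i' j' y assume "(i',j') \<in> L" "y \<in> T(i',j')" "i' < y"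
        then have "P y" unfolding P_def by blast
        then show "x \<le> y" unfolding x_def by (rule Least_le)
      qed
      define Q where "Q j \<longleftrightarrow> (\<exists>i. (i,j) \<in> L \<and> x \<in> T(i,j) \<and> i < x)" for j
      have "\<exists>j. Q j" using Px unfolding P_def Q_def by blast
      then obtain j0 where "Q j0" by blast
      define j where "j = (LEAST j. Q j)"
      have Qj: "Q j" unfolding j_def by (rule LeastI[of Q j0]) fact
      have M2: "\<And>i' j'. (i',j') \<in> L \<Longrightarrow> x \<in> T(i',j') \<Longrightarrow> i' < x \<Longrightarrow> j \<le> j'"
      proof -
        fix i' j' assume "(i',j') \<in> L" "x \<in> T(i',j')" "i' < x"
        then have "Q j'" unfolding Q_def by blast
        then show "j \<le> j'" unfolding j_def by (rule Least_le)
      qed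
      obtain i where ij: "(i,j) \<in> L" "x \<in> T(i,j)" "i < x" using Qj unfolding Q_def by blast
      obtain T' where T': "tab T'" "wt T' < wt T" "(f T', f T) \<in> excite_step d mu"
        by (rule exE[OF destep[OF t ij(1) ij(2) ij(3)]]) (use M1 M2 in blast)+
      have "(L, f T') \<in> (excite_step d mu)\<^sup>*" using less T' wn by blast
      then show ?thesis using T'(3) by (rule rtrancl_into_rtrancl)
    qed
  qed
qed

lemma f_exc: "tab T \<Longrightarrow> f T \<in> excitations d la mu"
  using f_exc_aux unfolding excitations_def by blast

lemma tab0: "tab (\<lambda>b. if b \<in> L then {fst b} else {})"
  unfolding sv_tableaux_def by (auto simp: L_iff intro: order.trans[OF _ la_mu])


lemma f_tab0: "f (\<lambda>b. if b \<in> L then {fst b} else {}) = L"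
  by (rule base_case[OF tab0]) auto

lemma exc_tab: "C \<in> excitations d la mu \<Longrightarrow> \<exists>T. tab T \<and> C = f T"
  unfolding excitations_def
proof (simp only: mem_Collect_eq)
  assume "(L, C) \<in> (excite_step d mu)\<^sup>*"
  then show "\<exists>T. tab T \<and> C = f T"
  proof (induction rule: rtrancl_induct)
    case base then show ?case using tab0 f_tab0 by metis
  next
    case (step y z)
    then obtain T where "tab T" "y = f T" by blast
    then show ?case using step_tab step(2) by blast
  qed
qed

theorem main_bij: "bij_betw f (sv_tableaux d la mu) (excitations d la mu)"
  unfolding bij_betw_def
proof
  show "inj_on f (sv_tableaux d la mu)" using f_inj by (auto intro: inj_onI)
  show "f ` sv_tableaux d la mu = excitations d la mu"
    using f_exc exc_tab by blast
qed

end

theorem proposition4p18: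
  fixes n d :: nat and w v :: "nat \<Rightarrow> nat"
  assumes "1 \<le> d" and "d < n"
    and "w \<in> grassmannian n d" and "v \<in> grassmannian n d"
    and "bruhat_le n w v"
  shows "bij_betw (fmap d (lam d w)) (sv_tableaux d (lam d w) (lam d v))
                   (excitations d (lam d w) (lam d v))"
proof -
  interpret exc d "lam d w" "lam d v"
  proof
    show "\<And>i i'. 1 \<le> i \<Longrightarrow> i \<le> i' \<Longrightarrow> i' \<le> d \<Longrightarrow> lam d w i' \<le> lam d w i"
      using lam_anti[OF assms(3)] by blast
    show "\<And>i i'. 1 \<le> i \<Longrightarrow> i \<le> i' \<Longrightarrow> i' \<le> d \<Longrightarrow> lam d v i' \<le> lam d v i"
      using lam_anti[OF assms(4)] by blast
    show "lam d w i \<le> lam d v i" if "1 \<le> i" "i \<le> d" for i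
    proof -
      have "w (d+1-i) \<le> v (d+1-i)" by (rule grass_le[OF assms(3,4,5)]) (use that in auto)
      then show ?thesis unfolding lam_def by simp
    qed
  qed
  show ?thesis by (rule main_bij)
qed

end
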